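(* Let $\kappa$ be a regular uncountable cardinal with $\kappa^{<\kappa}=\kappa$ and $\gamma^\omega<\kappa$ for all $\gamma<\kappa$, and suppose $\kappa=\lambda^+$. Then the linear order $I$ described in the context is $(<\kappa,bs)$-stable.
   Context: $I^0$: order $\kappa\times\mathbb Q$ lexicographically; $I^0$ is the set of $f:\omega\to\kappa\times\mathbb Q$, $f(n)=(f_1(n),f_2(n))$, with $\{n\mid f_1(n)\ne0\}$ finite, ordered by comparing at the least $n$ where they differ. Construct linear orders $I^0\subseteq I^1\subseteq\dots$ ($i<\kappa$): given $I^i$, for each $\nu\in I^i$ add a new element $\nu^{i+1}$ with $\nu^{i+1}<\nu$ and, for all $\tau\in I^i\setminus\{\nu\}$, $\tau<\nu^{i+1}$ iff $\tau<\nu$ (for distinct $\nu,\mu$, $\nu^{i+1}<\mu^{i+1}$ iff $\nu<\mu$); $I^{i+1}=I^i\cup\{\nu^{i+1}\mid\nu\in I^i\}$; unions at limits; $I=\bigcup_{i<\kappa}I^i$. For a linear order $A$, $tp_{bs}(a,B,A)$ is the set of atomic and negated atomic formulas with parameters from $B$ satisfied by $a$; $A$ is $(<\kappa,bs)$-stable if for every $B\subseteq A$ with $|B|<\kappa$, $|\{tp_{bs}(a,B,A)\mid a\in A\}|<\kappa$. *)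

theory Defs
  imports Complex_Main
begin

definition kzero :: "'k rel \<Rightarrow> 'k" where
  "kzero k = (THE z. z \<in> Field k \<and> (\<forall>x\<in>Field k. (z, x) \<in> k))"

definition ksucc :: "'k rel \<Rightarrow> 'k \<Rightarrow> 'k" where
  "ksucc k i = (THE j. j \<in> aboveS k i \<and> (\<forall>x\<in>aboveS k i. (j, x) \<in> k))"

definition klimit :: "'k rel \<Rightarrow> 'k \<Rightarrow> bool" where
  "klimit k j \<longleftrightarrow> j \<in> Field k \<and> j \<noteq> kzero k \<and> (\<forall>i\<in>Field k. j \<noteq> ksucc k i)"

definition I0_set :: "'k rel \<Rightarrow> (nat \<Rightarrow> 'k \<times> rat) set" where
  "I0_set k = {f. (\<forall>n. fst (f n) \<in> Field k) \<and> finite {n. fst (f n) \<noteq> kzero k}}"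

definition pair_less :: "'k rel \<Rightarrow> 'k \<times> rat \<Rightarrow> 'k \<times> rat \<Rightarrow> bool" where
  "pair_less k p q \<longleftrightarrow>
     (fst p \<noteq> fst q \<and> (fst p, fst q) \<in> k) \<or> (fst p = fst q \<and> snd p < snd q)"

definition I0_less :: "'k rel \<Rightarrow> (nat \<Rightarrow> 'k \<times> rat) \<Rightarrow> (nat \<Rightarrow> 'k \<times> rat) \<Rightarrow> bool" where
  "I0_less k f g \<longleftrightarrow> f \<noteq> g \<and>
     pair_less k (f (LEAST n. f n \<noteq> g n)) (g (LEAST n. f n \<noteq> g n))"

text \<open>is_I_construction k L St nu emb I: L is a strict linear order on I; St i is the
  stage I^i (i an ordinal below kappa, i.e. i in Field k); emb identifies I^0 with St 0
  order-isomorphically; nu i \<nu> is the new element \<nu>^(i+1) added at stage i+1.\<close>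

definition is_I_construction ::
  "'k rel \<Rightarrow> 'x rel \<Rightarrow> ('k \<Rightarrow> 'x set) \<Rightarrow> ('k \<Rightarrow> 'x \<Rightarrow> 'x)
     \<Rightarrow> ((nat \<Rightarrow> 'k \<times> rat) \<Rightarrow> 'x) \<Rightarrow> 'x set \<Rightarrow> bool" where
  "is_I_construction k L St nu emb I \<longleftrightarrow>
     strict_linear_order_on I L \<and>
     inj_on emb (I0_set k) \<and>
     St (kzero k) = emb ` I0_set k \<and>
     (\<forall>f\<in>I0_set k. \<forall>g\<in>I0_set k. (emb f, emb g) \<in> L \<longleftrightarrow> I0_less k f g) \<and>
     (\<forall>i\<in>Field k.
        St (ksucc k i) = St i \<union> nu i ` St i \<and>
        inj_on (nu i) (St i) \<and>
        nu i ` St i \<inter> St i = {} \<and>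
        (\<forall>\<nu>\<in>St i.
           (nu i \<nu>, \<nu>) \<in> L \<and>
           (\<forall>\<tau>\<in>St i - {\<nu>}. (\<tau>, nu i \<nu>) \<in> L \<longleftrightarrow> (\<tau>, \<nu>) \<in> L) \<and>
           (\<forall>\<mu>\<in>St i - {\<nu>}. (nu i \<nu>, nu i \<mu>) \<in> L \<longleftrightarrow> (\<nu>, \<mu>) \<in> L))) \<and>
     (\<forall>j. klimit k j \<longrightarrow> St j = (\<Union>i\<in>underS k j. St i)) \<and>
     I = (\<Union>i\<in>Field k. St i)"

section \<open>Basic (quantifier-free) types in the language of linear orders\<close>

datatype 'a tm = Var | Par 'a
datatype 'a atom = Lt "'a tm" "'a tm" | Eq "'a tm" "'a tm"
datatype 'a lit = Pos "'a atom" | Neg "'a atom"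

fun tm_val :: "'a \<Rightarrow> 'a tm \<Rightarrow> 'a" where
  "tm_val a Var = a"
| "tm_val a (Par b) = b"

fun tm_pars :: "'a tm \<Rightarrow> 'a set" where
  "tm_pars Var = {}"
| "tm_pars (Par b) = {b}"

fun atom_sat :: "'a rel \<Rightarrow> 'a \<Rightarrow> 'a atom \<Rightarrow> bool" where
  "atom_sat L a (Lt s t) \<longleftrightarrow> (tm_val a s, tm_val a t) \<in> L"
| "atom_sat L a (Eq s t) \<longleftrightarrow> tm_val a s = tm_val a t"

fun atom_pars :: "'a atom \<Rightarrow> 'a set" where
  "atom_pars (Lt s t) = tm_pars s \<union> tm_pars t"
| "atom_pars (Eq s t) = tm_pars s \<union> tm_pars t"

fun lit_sat :: "'a rel \<Rightarrow> 'a \<Rightarrow> 'a lit \<Rightarrow> bool" where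
  "lit_sat L a (Pos \<phi>) \<longleftrightarrow> atom_sat L a \<phi>"
| "lit_sat L a (Neg \<phi>) \<longleftrightarrow> \<not> atom_sat L a \<phi>"

fun lit_pars :: "'a lit \<Rightarrow> 'a set" where
  "lit_pars (Pos \<phi>) = atom_pars \<phi>"
| "lit_pars (Neg \<phi>) = atom_pars \<phi>"

definition tp_bs :: "'a rel \<Rightarrow> 'a \<Rightarrow> 'a set \<Rightarrow> 'a lit set" where
  "tp_bs L a B = {\<phi>. lit_pars \<phi> \<subseteq> B \<and> lit_sat L a \<phi>}"

definition bs_stable :: "'k rel \<Rightarrow> 'a set \<Rightarrow> 'a rel \<Rightarrow> bool" where
  "bs_stable k A L \<longleftrightarrow>
     (\<forall>B. B \<subseteq> A \<and> ordLess2 (card_of B) k \<longrightarrow>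
          ordLess2 (card_of {tp_bs L a B | a. a \<in> A}) k)"

end

theory Submission
  imports Defs "HOL-Library.Countable"
begin

unbundle cardinal_syntax


locale IC =
  fixes k :: "'k rel" and L :: "'x rel" and St :: "'k \<Rightarrow> 'x set" and nu :: "'k \<Rightarrow> 'x \<Rightarrow> 'x"
    and emb :: "(nat \<Rightarrow> 'k \<times> rat) \<Rightarrow> 'x" and I :: "'x set"
  assumes CO: "Card_order k" and INF: "\<not> finite (Field k)"
    and ICs: "is_I_construction k L St nu emb I"
begin

lemma WO: "Well_order k" using CO card_order_on_well_order_on by blast
lemma wo: "wo_rel k" using WO wo_rel_def by blast

lemmas ICs' = ICs[unfolded is_I_construction_def]

lemma slo: "strict_linear_order_on I L" by (rule ICs'[THEN conjunct1])
lemma Ltrans: "(a,b) \<in> L \<Longrightarrow> (b,c) \<in> L \<Longrightarrow> (a,c) \<in> L"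
  using slo unfolding strict_linear_order_on_def trans_def by blast
lemma Lirr: "(a,a) \<notin> L"
  using slo unfolding strict_linear_order_on_def irrefl_def by blast
lemma Ltot: "a \<in> I \<Longrightarrow> b \<in> I \<Longrightarrow> a \<noteq> b \<Longrightarrow> (a,b) \<in> L \<or> (b,a) \<in> L"
  using slo unfolding strict_linear_order_on_def total_on_def by blast
lemma Lasym: "(a,b) \<in> L \<Longrightarrow> (b,a) \<notin> L"
  using Ltrans Lirr by blast
lemma Lflip: "a \<in> I \<Longrightarrow> b \<in> I \<Longrightarrow> a \<noteq> b \<Longrightarrow> (a,b) \<in> L \<longleftrightarrow> (b,a) \<notin> L"
  using Ltot Lasym by blast

lemma St0: "St (kzero k) = emb ` I0_set k" by (rule ICs'[THEN conjunct2, THEN conjunct2, THEN conjunct1])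
lemma emb_inj: "inj_on emb (I0_set k)" by (rule ICs'[THEN conjunct2, THEN conjunct1])
lemma emb_ord: "f \<in> I0_set k \<Longrightarrow> g \<in> I0_set k \<Longrightarrow> (emb f, emb g) \<in> L \<longleftrightarrow> I0_less k f g"
  using ICs'[THEN conjunct2, THEN conjunct2, THEN conjunct2, THEN conjunct1] by blast
lemma C5: "i \<in> Field k \<Longrightarrow> St (ksucc k i) = St i \<union> nu i ` St i \<and>
        inj_on (nu i) (St i) \<and>
        nu i ` St i \<inter> St i = {} \<and>
        (\<forall>\<nu>\<in>St i.
           (nu i \<nu>, \<nu>) \<in> L \<and>
           (\<forall>\<tau>\<in>St i - {\<nu>}. (\<tau>, nu i \<nu>) \<in> L \<longleftrightarrow> (\<tau>, \<nu>) \<in> L) \<and>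
           (\<forall>\<mu>\<in>St i - {\<nu>}. (nu i \<nu>, nu i \<mu>) \<in> L \<longleftrightarrow> (\<nu>, \<mu>) \<in> L))"
  using ICs'[THEN conjunct2, THEN conjunct2, THEN conjunct2, THEN conjunct2, THEN conjunct1] by (rule bspec)
lemma Ssucc: "i \<in> Field k \<Longrightarrow> St (ksucc k i) = St i \<union> nu i ` St i"
  by (rule C5[THEN conjunct1])
lemma Sinj: "i \<in> Field k \<Longrightarrow> inj_on (nu i) (St i)"
  by (rule C5[THEN conjunct2, THEN conjunct1])
lemma Sdisj: "i \<in> Field k \<Longrightarrow> \<nu> \<in> St i \<Longrightarrow> nu i \<nu> \<notin> St i"
proof -
  assume "i \<in> Field k" "\<nu> \<in> St i"
  then have "nu i ` St i \<inter> St i = {}" "nu i \<nu> \<in> nu i ` St i" using C5 by auto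
  then show ?thesis by blast
qed
lemma C5b: "i \<in> Field k \<Longrightarrow> \<nu> \<in> St i \<Longrightarrow> (nu i \<nu>, \<nu>) \<in> L \<and>
           (\<forall>\<tau>\<in>St i - {\<nu>}. (\<tau>, nu i \<nu>) \<in> L \<longleftrightarrow> (\<tau>, \<nu>) \<in> L) \<and>
           (\<forall>\<mu>\<in>St i - {\<nu>}. (nu i \<nu>, nu i \<mu>) \<in> L \<longleftrightarrow> (\<nu>, \<mu>) \<in> L)"
proof -
  assume a: "i \<in> Field k" "\<nu> \<in> St i"
  have "\<forall>\<nu>\<in>St i.
           (nu i \<nu>, \<nu>) \<in> L \<and>
           (\<forall>\<tau>\<in>St i - {\<nu>}. (\<tau>, nu i \<nu>) \<in> L \<longleftrightarrow> (\<tau>, \<nu>) \<in> L) \<and>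
           (\<forall>\<mu>\<in>St i - {\<nu>}. (nu i \<nu>, nu i \<mu>) \<in> L \<longleftrightarrow> (\<nu>, \<mu>) \<in> L)"
    using C5[OF a(1)] by (elim conjE)
  then show ?thesis using a(2) by (rule bspec)
qed
lemma Sbelow: "i \<in> Field k \<Longrightarrow> \<nu> \<in> St i \<Longrightarrow> (nu i \<nu>, \<nu>) \<in> L"
  by (rule C5b[THEN conjunct1])
lemma Scmp1: "i \<in> Field k \<Longrightarrow> \<nu> \<in> St i \<Longrightarrow> \<tau> \<in> St i \<Longrightarrow> \<tau> \<noteq> \<nu> \<Longrightarrow>
   (\<tau>, nu i \<nu>) \<in> L \<longleftrightarrow> (\<tau>, \<nu>) \<in> L"
proof -
  assume a: "i \<in> Field k" "\<nu> \<in> St i" "\<tau> \<in> St i" "\<tau> \<noteq> \<nu>"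
  have "\<forall>\<tau>\<in>St i - {\<nu>}. (\<tau>, nu i \<nu>) \<in> L \<longleftrightarrow> (\<tau>, \<nu>) \<in> L" using C5b[OF a(1,2)] by (elim conjE)
  moreover have "\<tau> \<in> St i - {\<nu>}" using a by blast
  ultimately show ?thesis by (rule bspec)
qed
lemma Scmp2: "i \<in> Field k \<Longrightarrow> \<nu> \<in> St i \<Longrightarrow> \<mu> \<in> St i \<Longrightarrow> \<mu> \<noteq> \<nu> \<Longrightarrow>
   (nu i \<nu>, nu i \<mu>) \<in> L \<longleftrightarrow> (\<nu>, \<mu>) \<in> L"
proof -
  assume a: "i \<in> Field k" "\<nu> \<in> St i" "\<mu> \<in> St i" "\<mu> \<noteq> \<nu>"
  have "\<forall>\<mu>\<in>St i - {\<nu>}. (nu i \<nu>, nu i \<mu>) \<in> L \<longleftrightarrow> (\<nu>, \<mu>) \<in> L" using C5b[OF a(1,2)] by (elim conjE)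
  moreover have "\<mu> \<in> St i - {\<nu>}" using a by blast
  ultimately show ?thesis by (rule bspec)
qed
lemma Slim: "klimit k j \<Longrightarrow> St j = (\<Union>i\<in>underS k j. St i)"
  using ICs'[THEN conjunct2, THEN conjunct2, THEN conjunct2, THEN conjunct2, THEN conjunct2, THEN conjunct1] by blast
lemma Idef: "I = (\<Union>i\<in>Field k. St i)" by (rule ICs'[THEN conjunct2, THEN conjunct2, THEN conjunct2, THEN conjunct2, THEN conjunct2, THEN conjunct2])

lemma kzero_eq: "kzero k = wo_rel.minim k (Field k)"
  unfolding kzero_def wo_rel.minim_def[OF wo] wo_rel.isMinim_def[OF wo] by simp
lemma ksucc_eq: "ksucc k i = wo_rel.minim k (aboveS k i)"
  unfolding ksucc_def wo_rel.minim_def[OF wo] wo_rel.isMinim_def[OF wo] by simp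

lemma Field_ne: "Field k \<noteq> {}" using INF by auto
lemma kzero_in: "kzero k \<in> Field k"
  using wo_rel.minim_inField[OF wo, of "Field k"] Field_ne kzero_eq by auto
lemma kzero_least: "x \<in> Field k \<Longrightarrow> (kzero k, x) \<in> k"
  using wo_rel.minim_least[OF wo, of "Field k" x] Field_ne kzero_eq by auto

lemma aboveS_ne: "i \<in> Field k \<Longrightarrow> aboveS k i \<noteq> {}"
proof -
  assume i: "i \<in> Field k"
  obtain b where b: "b \<in> Field k" "i \<noteq> b" "(i,b) \<in> k"
    using infinite_Card_order_limit[OF CO INF i] by blast
  then have "b \<in> aboveS k i" unfolding aboveS_def by simp
  then show ?thesis by blast
qed
lemma aboveS_sub: "aboveS k i \<subseteq> Field k"
  unfolding aboveS_def Field_def by blast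

lemma ksucc_in: "i \<in> Field k \<Longrightarrow> ksucc k i \<in> aboveS k i"
  using wo_rel.minim_in[OF wo, of "aboveS k i"] aboveS_ne aboveS_sub ksucc_eq by auto
lemma ksucc_least: "i \<in> Field k \<Longrightarrow> j \<in> aboveS k i \<Longrightarrow> (ksucc k i, j) \<in> k"
  using wo_rel.minim_least[OF wo, of "aboveS k i" j] aboveS_ne aboveS_sub ksucc_eq by auto
lemma ksucc_F: "i \<in> Field k \<Longrightarrow> ksucc k i \<in> Field k"
  using ksucc_in aboveS_sub by blast
lemma ksucc_gt: "i \<in> Field k \<Longrightarrow> (i, ksucc k i) \<in> k \<and> i \<noteq> ksucc k i"
  using ksucc_in[of i] unfolding aboveS_def by auto

lemma ktrans: "(a,b) \<in> k \<Longrightarrow> (b,c) \<in> k \<Longrightarrow> (a,c) \<in> k"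
  using wo_rel.TRANS[OF wo] unfolding trans_def by blast
lemma kantisym: "(a,b) \<in> k \<Longrightarrow> (b,a) \<in> k \<Longrightarrow> a = b"
  using wo_rel.ANTISYM[OF wo] unfolding antisym_def by blast
lemma ktot: "a \<in> Field k \<Longrightarrow> b \<in> Field k \<Longrightarrow> (a,b) \<in> k \<or> (b,a) \<in> k"
  using wo_rel.TOTALS[OF wo] by blast
lemma krefl: "a \<in> Field k \<Longrightarrow> (a,a) \<in> k"
  using wo_rel.REFL[OF wo] unfolding refl_on_def by blast
lemma kF: "(a,b) \<in> k \<Longrightarrow> a \<in> Field k \<and> b \<in> Field k"
  unfolding Field_def by blast

lemma below_succ: "i \<in> Field k \<Longrightarrow> (j, ksucc k i) \<in> k \<Longrightarrow> j \<noteq> ksucc k i \<Longrightarrow> (j,i) \<in> k"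
proof -
  assume i: "i \<in> Field k" and j: "(j, ksucc k i) \<in> k" "j \<noteq> ksucc k i"
  have jF: "j \<in> Field k" using j kF by blast
  show "(j,i) \<in> k"
  proof (rule ccontr)
    assume "(j,i) \<notin> k"
    then have "(i,j) \<in> k" "i \<noteq> j" using ktot[OF jF i] krefl[OF i] by auto
    then have "j \<in> aboveS k i" unfolding aboveS_def by blast
    then have "(ksucc k i, j) \<in> k" using ksucc_least i by blast
    then show False using kantisym j by blast
  qed
qed

lemma mono_St: "(i,j) \<in> k \<Longrightarrow> St i \<subseteq> St j"
proof -
  have "\<forall>i. (i,j) \<in> k \<longrightarrow> St i \<subseteq> St j"
  proof (induction j rule: wo_rel.well_order_induct[OF wo])
    case (1 j)
    show ?case
    proof (intro allI impI)
      fix i assume ij: "(i,j) \<in> k"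
      show "St i \<subseteq> St j"
      proof (cases "i = j")
        case True then show ?thesis by simp
      next
        case False
        have jF: "j \<in> Field k" and iF: "i \<in> Field k" using ij kF by auto
        show ?thesis
        proof (cases "j = kzero k")
          case True
          then show ?thesis using kzero_least[OF iF] ij kantisym False by blast
        next
          case nz: False
          show ?thesis
          proof (cases "\<exists>i'\<in>Field k. j = ksucc k i'")
            case True
            then obtain i' where i': "i' \<in> Field k" "j = ksucc k i'" by blast
            have "(i,i') \<in> k" using below_succ[OF i'(1)] ij False i'(2) by blast
            moreover have "i' \<noteq> j \<and> (i',j) \<in> k" using ksucc_gt[OF i'(1)] i'(2) by blast
            ultimately have "St i \<subseteq> St i'" using 1 by blast
            then show ?thesis using Ssucc[OF i'(1)] i'(2) by blast
          next
            case False
            then have "klimit k j" using jF nz unfolding klimit_def by blast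
            moreover have "i \<in> underS k j" using ij \<open>i \<noteq> j\<close> unfolding underS_def by blast
            ultimately show ?thesis using Slim by blast
          qed
        qed
      qed
    qed
  qed
  then show "(i,j) \<in> k \<Longrightarrow> St i \<subseteq> St j" by blast
qed


definition stage :: "'x \<Rightarrow> 'k" where "stage a = wo_rel.minim k {i \<in> Field k. a \<in> St i}"

lemma St_I: "i \<in> Field k \<Longrightarrow> St i \<subseteq> I" using Idef by blast

lemma stage_props: "a \<in> I \<Longrightarrow> stage a \<in> Field k \<and> a \<in> St (stage a)"
proof -
  assume "a \<in> I"
  then have ne: "{i \<in> Field k. a \<in> St i} \<noteq> {}" using Idef by blast
  show ?thesis using wo_rel.minim_in[OF wo, of "{i \<in> Field k. a \<in> St i}"] ne
    unfolding stage_def by blast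
qed

lemma stage_least: "i \<in> Field k \<Longrightarrow> a \<in> St i \<Longrightarrow> (stage a, i) \<in> k"
  using wo_rel.minim_least[OF wo, of "{i \<in> Field k. a \<in> St i}" i] unfolding stage_def by blast

lemma St_iff: "a \<in> I \<Longrightarrow> j \<in> Field k \<Longrightarrow> a \<in> St j \<longleftrightarrow> (stage a, j) \<in> k"
  using stage_props stage_least mono_St by blast

lemma nu_St: "i \<in> Field k \<Longrightarrow> \<nu> \<in> St i \<Longrightarrow> nu i \<nu> \<in> St (ksucc k i)"
  using Ssucc by blast

lemma nu_I: "i \<in> Field k \<Longrightarrow> \<nu> \<in> St i \<Longrightarrow> nu i \<nu> \<in> I"
  using nu_St St_I ksucc_F by blast

lemma decomp: "a \<in> I \<Longrightarrow> a \<notin> St (kzero k) \<Longrightarrow> \<exists>i\<in>Field k. \<exists>\<nu>\<in>St i. a = nu i \<nu>"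
proof -
  assume aI: "a \<in> I" and a0: "a \<notin> St (kzero k)"
  define s where "s = stage a"
  have sF: "s \<in> Field k" and as: "a \<in> St s" using stage_props[OF aI] s_def by auto
  have "s \<noteq> kzero k" using as a0 by blast
  show ?thesis
  proof (cases "\<exists>i\<in>Field k. s = ksucc k i")
    case True
    then obtain i where i: "i \<in> Field k" "s = ksucc k i" by blast
    have "a \<notin> St i"
    proof
      assume "a \<in> St i"
      then have "(s, i) \<in> k" using stage_least[OF i(1)] s_def by blast
      then show False using ksucc_gt[OF i(1)] i(2) kantisym by blast
    qed
    then show ?thesis using as Ssucc[OF i(1)] i by blast
  next
    case False
    then have "klimit k s" using sF \<open>s \<noteq> kzero k\<close> unfolding klimit_def by blast
    then obtain i where i: "i \<in> underS k s" "a \<in> St i" using Slim as by blast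
    have iF: "i \<in> Field k" using i(1) unfolding underS_def Field_def by blast
    have "(s, i) \<in> k" using stage_least[OF iF i(2)] s_def by blast
    then show ?thesis using i(1) kantisym unfolding underS_def by blast
  qed
qed

lemma nu_uniq_aux: "i \<in> Field k \<Longrightarrow> j \<in> Field k \<Longrightarrow> \<nu> \<in> St i \<Longrightarrow> \<mu> \<in> St j \<Longrightarrow>
   (i,j) \<in> k \<Longrightarrow> i \<noteq> j \<Longrightarrow> nu i \<nu> \<noteq> nu j \<mu>"
proof
  assume a: "i \<in> Field k" "j \<in> Field k" "\<nu> \<in> St i" "\<mu> \<in> St j" "(i,j) \<in> k" "i \<noteq> j"
     and eq: "nu i \<nu> = nu j \<mu>"
  have "j \<in> aboveS k i" using a unfolding aboveS_def by blast
  then have "(ksucc k i, j) \<in> k" using ksucc_least a by blast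
  then have "nu i \<nu> \<in> St j" using mono_St nu_St a by blast
  then show False using Sdisj a eq by simp
qed

lemma nu_uniq: "i \<in> Field k \<Longrightarrow> j \<in> Field k \<Longrightarrow> \<nu> \<in> St i \<Longrightarrow> \<mu> \<in> St j \<Longrightarrow>
   nu i \<nu> = nu j \<mu> \<Longrightarrow> i = j \<and> \<nu> = \<mu>"
proof -
  assume a: "i \<in> Field k" "j \<in> Field k" "\<nu> \<in> St i" "\<mu> \<in> St j" "nu i \<nu> = nu j \<mu>"
  have "i = j" using nu_uniq_aux[of i j \<nu> \<mu>] nu_uniq_aux[of j i \<mu> \<nu>] a ktot by metis
  then show ?thesis using Sinj a unfolding inj_on_def by blast
qed

definition P :: "'x rel" where "P = {(\<nu>, nu i \<nu>) | i \<nu>. i \<in> Field k \<and> \<nu> \<in> St i}"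

lemma P_I: "(\<nu>,a) \<in> P \<Longrightarrow> \<nu> \<in> I \<and> a \<in> I"
  unfolding P_def using St_I nu_I by blast

lemma P_stage: "(\<nu>,a) \<in> P \<Longrightarrow> (stage \<nu>, stage a) \<in> k \<and> stage \<nu> \<noteq> stage a"
proof -
  assume "(\<nu>,a) \<in> P"
  then obtain i where i: "i \<in> Field k" "\<nu> \<in> St i" "a = nu i \<nu>" unfolding P_def by blast
  have aI: "a \<in> I" using nu_I i by blast
  have 1: "(stage \<nu>, i) \<in> k" using stage_least i by blast
  have sa: "stage a \<in> Field k" using stage_props aI by blast
  have n: "(stage a, i) \<notin> k" using St_iff[OF aI i(1)] Sdisj i by blast
  then have 2: "(i, stage a) \<in> k" using ktot[OF sa i(1)] by blast
  have "(stage \<nu>, stage a) \<in> k" using 1 2 ktrans by blast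
  moreover have "stage \<nu> \<noteq> stage a"
  proof
    assume "stage \<nu> = stage a"
    then have "(stage a, i) \<in> k" using 1 by simp
    then show False using n by simp
  qed
  ultimately show ?thesis by simp
qed

lemma wfP: "wf P"
proof -
  have "wf (inv_image (k - Id) stage)" using wo_rel.WF[OF wo] by (rule wf_inv_image)
  moreover have "P \<subseteq> inv_image (k - Id) stage" using P_stage by auto
  ultimately show ?thesis using wf_subset by blast
qed

lemma P_uniq: "(\<nu>,a) \<in> P \<Longrightarrow> (\<mu>,a) \<in> P \<Longrightarrow> \<nu> = \<mu>"
  unfolding P_def using nu_uniq by blast

lemma root_noP: "r \<in> St (kzero k) \<Longrightarrow> (\<nu>,r) \<notin> P"
proof
  assume r: "r \<in> St (kzero k)" and "(\<nu>,r) \<in> P"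
  then obtain i where i: "i \<in> Field k" "\<nu> \<in> St i" "r = nu i \<nu>" unfolding P_def by blast
  have "r \<in> St i" using r mono_St kzero_least i(1) by blast
  then show False using Sdisj i by blast
qed

lemma Pstar_I: "(x,z) \<in> P\<^sup>* \<Longrightarrow> x \<in> I \<Longrightarrow> z \<in> I"
  by (induction rule: rtrancl_induct) (auto dest: P_I)

lemma Pstar_stage: "(x,z) \<in> P\<^sup>* \<Longrightarrow> x \<in> I \<Longrightarrow> (stage x, stage z) \<in> k"
proof (induction rule: rtrancl_induct)
  case base then show ?case using stage_props krefl by blast
next
  case (step y z) then show ?case using P_stage ktrans by blast
qed

lemma anc_St: "x \<in> I \<Longrightarrow> (x,z) \<in> P\<^sup>* \<Longrightarrow> i \<in> Field k \<Longrightarrow> z \<in> St i \<Longrightarrow> x \<in> St i"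
proof -
  assume a: "x \<in> I" "(x,z) \<in> P\<^sup>*" "i \<in> Field k" "z \<in> St i"
  have "z \<in> I" using Pstar_I a by blast
  then have "(stage z, i) \<in> k" using St_iff a by blast
  then have "(stage x, i) \<in> k" using Pstar_stage[OF a(2,1)] ktrans by blast
  then show ?thesis using St_iff a by blast
qed

lemma cmp: "x \<in> I \<Longrightarrow> y \<in> I \<Longrightarrow> (x,z) \<in> P\<^sup>* \<Longrightarrow> (x,y) \<notin> P\<^sup>* \<Longrightarrow> ((z,y) \<in> L \<longleftrightarrow> (x,y) \<in> L)"
proof -
  assume xI: "x \<in> I"
  have "y \<in> I \<longrightarrow> (\<forall>z. (x,z) \<in> P\<^sup>* \<longrightarrow> (x,y) \<notin> P\<^sup>* \<longrightarrow> ((z,y) \<in> L \<longleftrightarrow> (x,y) \<in> L))"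
  proof (induction y rule: wf_induct[OF wfP])
    case (1 y)
    show ?case
    proof (intro allI impI)
      fix z assume yI: "y \<in> I" and xz: "(x,z) \<in> P\<^sup>*" and xy: "(x,y) \<notin> P\<^sup>*"
      from xz show "((z,y) \<in> L \<longleftrightarrow> (x,y) \<in> L)"
      proof (induction z rule: rtrancl_induct)
        case base then show ?case by simp
      next
        case (step \<nu> z)
        obtain i where i: "i \<in> Field k" "\<nu> \<in> St i" "z = nu i \<nu>" using step(2) unfolding P_def by blast
        have xz': "(x,z) \<in> P\<^sup>*" using step(1,2) by auto
        have yz: "y \<noteq> z" using xz' xy by blast
        have yv: "y \<noteq> \<nu>" using step(1) xy by blast
        have zI: "z \<in> I" and vI: "\<nu> \<in> I" using P_I step(2) by auto
        have xSi: "x \<in> St i" using anc_St[OF xI step(1) i(1,2)] .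
        show ?case
        proof (cases "y \<in> St i")
          case True
          have "(y,z) \<in> L \<longleftrightarrow> (y,\<nu>) \<in> L" using Scmp1[OF i(1,2) True yv] i(3) by simp
          then have "(z,y) \<in> L \<longleftrightarrow> (\<nu>,y) \<in> L" using Lflip yI zI vI yz yv by metis
          then show ?thesis using step.IH by simp
        next
          case False
          then have "y \<notin> St (kzero k)" using mono_St kzero_least i(1) by blast
          then obtain j \<mu> where j: "j \<in> Field k" "\<mu> \<in> St j" "y = nu j \<mu>" using decomp yI by blast
          have muP: "(\<mu>,y) \<in> P" using j unfolding P_def by blast
          have xmu: "(x,\<mu>) \<notin> P\<^sup>*" using muP xy by (meson rtrancl.rtrancl_into_rtrancl)
          have muI: "\<mu> \<in> I" using P_I muP by blast
          have IHmu: "\<forall>z. (x,z) \<in> P\<^sup>* \<longrightarrow> ((z,\<mu>) \<in> L \<longleftrightarrow> (x,\<mu>) \<in> L)"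
            using 1 muP muI xmu by blast
          have xmu': "x \<noteq> \<mu>" using xmu by blast
          consider "i = j" | "(i,j) \<in> k \<and> i \<noteq> j" | "(j,i) \<in> k \<and> j \<noteq> i" using ktot i(1) j(1) by blast
          then show ?thesis
          proof cases
            case 1
            have "\<mu> \<noteq> \<nu>" using yz i(3) j(3) 1 by blast
            then have "(z,y) \<in> L \<longleftrightarrow> (\<nu>,\<mu>) \<in> L" using Scmp2[OF i(1,2)] j 1 i(3) by blast
            also have "\<dots> \<longleftrightarrow> (x,\<mu>) \<in> L" using IHmu step(1) by blast
            also have "\<dots> \<longleftrightarrow> (x,y) \<in> L" using Scmp1[OF j(1,2)] xSi 1 xmu' j(3) by blast
            finally show ?thesis .
          next
            case 2
            then have "j \<in> aboveS k i" unfolding aboveS_def by blast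
            then have sj: "(ksucc k i, j) \<in> k" using ksucc_least i(1) by blast
            then have zSj: "z \<in> St j" using mono_St nu_St i by blast
            have zmu: "z \<noteq> \<mu>" using xz' muP xy by (meson rtrancl.rtrancl_into_rtrancl)
            have "(z,y) \<in> L \<longleftrightarrow> (z,\<mu>) \<in> L" using Scmp1[OF j(1,2) zSj zmu] j(3) by simp
            also have "\<dots> \<longleftrightarrow> (x,\<mu>) \<in> L" using IHmu xz' by blast
            also have "\<dots> \<longleftrightarrow> (x,y) \<in> L"
              using Scmp1[OF j(1,2)] xSi mono_St 2 xmu' j(3) by blast
            finally show ?thesis .
          next
            case 3
            then have "i \<in> aboveS k j" unfolding aboveS_def by blast
            then have "(ksucc k j, i) \<in> k" using ksucc_least j(1) by blast
            then have "y \<in> St i" using mono_St nu_St j by blast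
            then show ?thesis using False by blast
          qed
        qed
      qed
    qed
  qed
  then show "y \<in> I \<Longrightarrow> (x,z) \<in> P\<^sup>* \<Longrightarrow> (x,y) \<notin> P\<^sup>* \<Longrightarrow> ((z,y) \<in> L \<longleftrightarrow> (x,y) \<in> L)" by blast
qed

lemma child_lt: "i \<in> Field k \<Longrightarrow> j \<in> Field k \<Longrightarrow> x \<in> St i \<Longrightarrow> (i,j) \<in> k \<Longrightarrow> i \<noteq> j \<Longrightarrow>
   (nu i x, nu j x) \<in> L"
proof -
  assume a: "i \<in> Field k" "j \<in> Field k" "x \<in> St i" "(i,j) \<in> k" "i \<noteq> j"
  have xj: "x \<in> St j" using mono_St a by blast
  have "j \<in> aboveS k i" using a unfolding aboveS_def by blast
  then have "(ksucc k i, j) \<in> k" using ksucc_least a by blast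
  then have "nu i x \<in> St j" using mono_St nu_St a by blast
  moreover have "nu i x \<noteq> x" using Sdisj[OF a(1) a(3)] a(3) by auto
  ultimately show ?thesis using Scmp1[OF a(2) xj] Sbelow[OF a(1,3)] by blast
qed

end


lemma factor_card:
  assumes "\<And>a a'. a \<in> X \<Longrightarrow> a' \<in> X \<Longrightarrow> h a = h a' \<Longrightarrow> t a = t a'"
  shows "|t ` X| \<le>o |h ` X|"
proof -
  have "t ` X = (\<lambda>d. t (SOME a. a \<in> X \<and> h a = d)) ` (h ` X)"
  proof (rule set_eqI, rule iffI)
    fix y assume "y \<in> t ` X"
    then obtain a where a: "a \<in> X" "y = t a" by blast
    have "(SOME b. b \<in> X \<and> h b = h a) \<in> X \<and> h (SOME b. b \<in> X \<and> h b = h a) = h a"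
      by (rule someI[of _ a]) (use a in blast)
    then have "t (SOME b. b \<in> X \<and> h b = h a) = t a" using assms a by blast
    then show "y \<in> (\<lambda>d. t (SOME a. a \<in> X \<and> h a = d)) ` (h ` X)" using a by force
  next
    fix y assume "y \<in> (\<lambda>d. t (SOME a. a \<in> X \<and> h a = d)) ` (h ` X)"
    then obtain a where a: "a \<in> X" "y = t (SOME b. b \<in> X \<and> h b = h a)" by blast
    have "(SOME b. b \<in> X \<and> h b = h a) \<in> X"
      by (rule someI2[of _ a]) (use a in blast)+
    then show "y \<in> t ` X" using a by blast
  qed
  then show ?thesis using card_of_image by metis
qed

locale IC2 = IC k L St nu emb I
  for k :: "'k rel" and L :: "'x rel" and St :: "'k \<Rightarrow> 'x set" and nu :: "'k \<Rightarrow> 'x \<Rightarrow> 'x"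
    and emb :: "(nat \<Rightarrow> 'k \<times> rat) \<Rightarrow> 'x" and I :: "'x set" +
  assumes REG: "regularCard k" and NAT: "ordLess2 natLeq k"
    and GO: "\<forall>A. A \<subseteq> Field k \<and> ordLess2 (card_of A) k \<longrightarrow>
                            ordLess2 (card_of (Func (UNIV :: nat set) A)) k"
begin

lemma ST: "stable k" using regularCard_stable[OF CO INF REG] .

lemma nat_lt: "|UNIV::nat set| <o k"
  using card_of_nat NAT ordIso_ordLess_trans by blast

lemma rat_lt: "|UNIV::rat set| <o k"
proof -
  have "|UNIV::rat set| \<le>o |UNIV::nat set|"
    using card_of_ordLeq[of "UNIV::rat set" "UNIV::nat set"] inj_to_nat by blast
  then show ?thesis using nat_lt ordLeq_ordLess_trans by blast
qed

lemma finite_lt: "finite A \<Longrightarrow> |A| <o k"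
  using finite_ordLess_infinite[of "|A|" k] card_of_well_order_on Field_card_of WO INF by metis

lemma times_lt: "|A| <o k \<Longrightarrow> |B| <o k \<Longrightarrow> |A \<times> B| <o k"
  using stable_elim[OF ST, of A "\<lambda>_. B"] by simp

lemma un_lt: "|A| <o k \<Longrightarrow> |B| <o k \<Longrightarrow> |A \<union> B| <o k"
  using card_of_Un_ordLess_infinite_Field[OF INF CO] by blast

lemma image_lt: "|A| <o k \<Longrightarrow> |f ` A| <o k"
  using card_of_image ordLeq_ordLess_trans by blast

lemma sub_lt: "A \<subseteq> B \<Longrightarrow> |B| <o k \<Longrightarrow> |A| <o k"
  using card_of_mono1 ordLeq_ordLess_trans by blast

lemma leq_lt: "|A| \<le>o |B| \<Longrightarrow> |B| <o k \<Longrightarrow> |A| <o k"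
  using ordLeq_ordLess_trans by blast

lemma union_lt: "|A| <o k \<Longrightarrow> (\<And>a. a \<in> A \<Longrightarrow> |F a| <o k) \<Longrightarrow> |\<Union>a\<in>A. F a| <o k"
  using stable_UNION[OF ST] by blast

lemma func_lt: "V \<subseteq> Field k \<times> (UNIV::rat set) \<Longrightarrow> |V| <o k \<Longrightarrow> |{f::nat \<Rightarrow> 'k \<times> rat. range f \<subseteq> V}| <o k"
proof -
  assume V: "|V| <o k"
  have "|V| <o |Field k|" by (rule ordLess_ordIso_trans[OF V ordIso_symmetric[OF card_of_Field_ordIso[OF CO]]])
  then have "|V| \<le>o |Field k|" by (rule ordLess_imp_ordLeq)
  then obtain h where h: "inj_on h V" "h ` V \<subseteq> Field k"
    using card_of_ordLeq[of V "Field k"] by blast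
  have A: "|h ` V| <o k" using image_lt V by blast
  then have FA: "|Func (UNIV::nat set) (h ` V)| <o k" using GO h(2) by blast
  have "|{f::nat \<Rightarrow> 'k \<times> rat. range f \<subseteq> V}| \<le>o |Func (UNIV::nat set) (h ` V)|"
  proof -
    have "inj_on (\<lambda>f. h \<circ> f) {f::nat \<Rightarrow> 'k \<times> rat. range f \<subseteq> V}"
    proof (rule inj_onI)
      fix f g :: "nat \<Rightarrow> 'k \<times> rat"
      assume f: "f \<in> {f. range f \<subseteq> V}" and g: "g \<in> {f. range f \<subseteq> V}" and e: "h \<circ> f = h \<circ> g"
      show "f = g"
      proof
        fix n
        have "h (f n) = h (g n)" using e by (metis comp_apply)
        then show "f n = g n" using h(1) f g unfolding inj_on_def by blast
      qed
    qed
    moreover have "(\<lambda>f. h \<circ> f) ` {f::nat \<Rightarrow> 'k \<times> rat. range f \<subseteq> V} \<subseteq> Func (UNIV::nat set) (h ` V)"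
      unfolding Func_def by (auto intro!: imageI simp: image_subset_iff)
    ultimately show ?thesis using card_of_ordLeq by blast
  qed
  then show ?thesis using FA ordLeq_ordLess_trans by blast
qed

end


lemma least_diff_at:
  fixes f g :: "nat \<Rightarrow> 'a" and m :: nat
  assumes "\<forall>l<m. f l = g l" "f m \<noteq> g m"
  shows "(LEAST n. f n \<noteq> g n) = m"
proof (rule Least_equality)
  show "f m \<noteq> g m" using assms(2) .
  fix y assume "f y \<noteq> g y"
  then show "m \<le> y" using assms(1) not_le by blast
qed

lemma I0_less_at: "\<forall>l<m. f l = g l \<Longrightarrow> f m \<noteq> g m \<Longrightarrow> I0_less k f g = pair_less k (f m) (g m)"
proof -
  assume a: "\<forall>l<m. f l = g l" and b: "f m \<noteq> g m"
  have e: "(LEAST n. f n \<noteq> g n) = m" by (rule least_diff_at[OF a b])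
  have "f \<noteq> g" using b by auto
  then show ?thesis unfolding I0_less_def e by simp
qed

lemma I0_less_transfer:
  assumes fh: "\<forall>l<m. f l = h l" and ex: "\<exists>l<m. h l \<noteq> g l"
  shows "I0_less k f g = I0_less k h g"
proof -
  define d where "d = (LEAST n. h n \<noteq> g n)"
  obtain l where l: "l < m" "h l \<noteq> g l" using ex by blast
  have "d \<le> l" unfolding d_def by (rule Least_le) (use l in blast)
  then have dm: "d < m" using l by simp
  have hd: "h d \<noteq> g d" unfolding d_def by (rule LeastI) (use l in blast)
  have below: "\<forall>y<d. h y = g y" unfolding d_def using not_less_Least by blast
  have fd: "f d = h d" using fh dm by blast
  have "\<forall>y<d. f y = g y" using below fh dm by auto
  then have "I0_less k f g = pair_less k (f d) (g d)" using I0_less_at hd fd by metis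
  moreover have "I0_less k h g = pair_less k (h d) (g d)" using I0_less_at below hd by metis
  ultimately show ?thesis using fd by simp
qed

context IC2
begin

lemma I0_small:
  assumes R0: "R0 \<subseteq> I0_set k" "|R0| <o k"
  shows "|(\<lambda>f. {g\<in>R0. I0_less k f g}) ` I0_set k| <o k"
proof (cases "R0 = {}")
  case True
  then have "(\<lambda>f. {g\<in>R0. I0_less k f g}) ` I0_set k \<subseteq> {{}}" by auto
  then show ?thesis using sub_lt finite_lt[of "{{}}"] by blast
next
  case False
  define V where "V = (\<Union>g\<in>R0. range g)"
  have V_lt: "|V| <o k" unfolding V_def
    by (rule union_lt[OF R0(2)]) (use card_of_image nat_lt ordLeq_ordLess_trans in blast)
  have VF: "V \<subseteq> Field k \<times> UNIV"
  proof
    fix x assume "x \<in> V"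
    then obtain g n where "g \<in> R0" "x = g n" unfolding V_def by blast
    then have "fst x \<in> Field k" using R0(1) unfolding I0_set_def by blast
    then show "x \<in> Field k \<times> UNIV" by (cases x) auto
  qed
  define V1 where "V1 = fst ` V"
  have V1F: "V1 \<subseteq> Field k" using VF unfolding V1_def by force
  have V1_lt: "|V1| <o k" unfolding V1_def using image_lt V_lt by blast
  define S where "S \<alpha> = {\<beta>\<in>V1. (\<alpha>,\<beta>) \<in> k}" for \<alpha>
  define nx where "nx \<alpha> = (if S \<alpha> = {} then None else Some (wo_rel.minim k (S \<alpha>)))" for \<alpha>
  have SF: "S \<alpha> \<subseteq> Field k" for \<alpha> using V1F unfolding S_def by blast
  have nx_in: "nx \<alpha> \<in> {None} \<union> Some ` V1" for \<alpha>
  proof (cases "S \<alpha> = {}")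
    case True then show ?thesis unfolding nx_def by simp
  next
    case False
    then have "wo_rel.minim k (S \<alpha>) \<in> S \<alpha>" using wo_rel.minim_in[OF wo] SF by blast
    then show ?thesis using False unfolding nx_def S_def by auto
  qed
  have nx_prop: "(\<alpha>,\<beta>) \<in> k \<longleftrightarrow> (\<exists>\<gamma>. nx \<alpha> = Some \<gamma> \<and> (\<gamma>,\<beta>) \<in> k)" if b: "\<beta> \<in> V1" for \<alpha> \<beta>
  proof
    assume ab: "(\<alpha>,\<beta>) \<in> k"
    then have bS: "\<beta> \<in> S \<alpha>" using b unfolding S_def by blast
    then have "S \<alpha> \<noteq> {}" by blast
    moreover have "(wo_rel.minim k (S \<alpha>), \<beta>) \<in> k" using wo_rel.minim_least[OF wo] SF bS by blast
    ultimately show "\<exists>\<gamma>. nx \<alpha> = Some \<gamma> \<and> (\<gamma>,\<beta>) \<in> k" unfolding nx_def by simp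
  next
    assume "\<exists>\<gamma>. nx \<alpha> = Some \<gamma> \<and> (\<gamma>,\<beta>) \<in> k"
    then obtain \<gamma> where g: "nx \<alpha> = Some \<gamma>" "(\<gamma>,\<beta>) \<in> k" by blast
    then have ne: "S \<alpha> \<noteq> {}" and ge: "\<gamma> = wo_rel.minim k (S \<alpha>)" unfolding nx_def by (auto split: if_splits)
    then have "\<gamma> \<in> S \<alpha>" using wo_rel.minim_in[OF wo] SF by blast
    then have "(\<alpha>,\<gamma>) \<in> k" unfolding S_def by blast
    then show "(\<alpha>,\<beta>) \<in> k" using g ktrans by blast
  qed
  define ok where "ok f n \<longleftrightarrow> (\<exists>g\<in>R0. \<forall>m<n. f m = g m)" for f :: "nat \<Rightarrow> 'k \<times> rat" and n
  define br where "br f \<longleftrightarrow> (\<forall>n. ok f n)" for f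
  define dm where "dm f = (LEAST n. \<not> ok f n) - 1" for f
  define dg where "dg f = (SOME g. g \<in> R0 \<and> (\<forall>l<dm f. f l = g l))" for f
  define dw where "dw f = (if fst (f (dm f)) \<in> V1 then Inl (f (dm f)) else Inr (nx (fst (f (dm f)))))" for f
  define data where "data f = (if br f then Inl f else Inr (dm f, dg f, dw f))" for f
  have key: "ok f (dm f) \<and> \<not> ok f (Suc (dm f))" if nb: "\<not> br f" for f
  proof -
    have ex: "\<exists>n. \<not> ok f n" using nb unfolding br_def by blast
    let ?n = "LEAST n. \<not> ok f n"
    have nn: "\<not> ok f ?n" by (rule LeastI_ex[OF ex])
    have o0: "ok f 0" using False unfolding ok_def by auto
    have "?n \<noteq> 0"
    proof
      assume "?n = 0"
      then have "\<not> ok f 0" using nn by simp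
      then show False using o0 by simp
    qed
    then have sucn: "Suc (dm f) = ?n" unfolding dm_def by simp
    have "ok f (dm f)" using not_less_Least[of "dm f" "\<lambda>n. \<not> ok f n"] sucn by auto
    then show ?thesis using nn sucn by simp
  qed
  have dg_prop: "dg f \<in> R0 \<and> (\<forall>l<dm f. f l = dg f l)" if nb: "\<not> br f" for f
  proof -
    have "\<exists>g. g \<in> R0 \<and> (\<forall>l<dm f. f l = g l)" using key[OF nb] unfolding ok_def by blast
    then show ?thesis unfolding dg_def by (rule someI_ex)
  qed
  have noext: "f (dm f) \<noteq> g (dm f)" if nb: "\<not> br f" and g: "g \<in> R0" "\<forall>l<dm f. f l = g l" for f g
  proof
    assume "f (dm f) = g (dm f)"
    then have "\<forall>l<Suc (dm f). f l = g l" using g(2) less_Suc_eq by auto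
    then show False using key[OF nb] g(1) unfolding ok_def by blast
  qed
  have cut_expr: "I0_less k f g \<longleftrightarrow> (if \<forall>l<dm f. g l = dg f l then pair_less k (f (dm f)) (g (dm f))
        else I0_less k (dg f) g)" if nb: "\<not> br f" and g: "g \<in> R0" for f g
  proof (cases "\<forall>l<dm f. g l = dg f l")
    case True
    then have fg: "\<forall>l<dm f. f l = g l" using dg_prop[OF nb] by simp
    then show ?thesis using I0_less_at[OF fg noext[OF nb g fg]] True by simp
  next
    case False
    then have "\<exists>l<dm f. dg f l \<noteq> g l" by auto
    then have e: "I0_less k f g = I0_less k (dg f) g"
      using I0_less_transfer[of "dm f" f "dg f" g] dg_prop[OF nb] by blast
    show ?thesis unfolding if_not_P[OF False] by (rule e)
  qed
  have br_range: "range f \<subseteq> V" if b: "br f" for f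
  proof
    fix x assume "x \<in> range f"
    then obtain n where n: "x = f n" by blast
    obtain g where "g \<in> R0" "\<forall>m<Suc n. f m = g m" using b unfolding br_def ok_def by blast
    then show "x \<in> V" unfolding V_def n by auto
  qed
  have pl: "pair_less k (f (dm f)) p = pair_less k (f' (dm f')) p"
    if f: "f \<in> I0_set k" and f': "f' \<in> I0_set k" and dw: "dw f = dw f'" and p: "p \<in> V" for f f' p
  proof (cases "fst (f (dm f)) \<in> V1")
    case True
    then have "dw f = Inl (f (dm f))" unfolding dw_def by simp
    then have "fst (f' (dm f')) \<in> V1 \<and> f' (dm f') = f (dm f)" using dw unfolding dw_def
      by (auto split: if_splits)
    then show ?thesis by simp
  next
    case False
    then have d1: "dw f = Inr (nx (fst (f (dm f))))" unfolding dw_def by simp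
    then have F': "fst (f' (dm f')) \<notin> V1" and nxe: "nx (fst (f' (dm f'))) = nx (fst (f (dm f)))"
      using dw unfolding dw_def by (auto split: if_splits)
    have pV: "fst p \<in> V1" using p unfolding V1_def by blast
    have "pair_less k (f (dm f)) p \<longleftrightarrow> (fst (f (dm f)), fst p) \<in> k"
      using False pV unfolding pair_less_def by auto
    also have "\<dots> \<longleftrightarrow> (\<exists>\<gamma>. nx (fst (f (dm f))) = Some \<gamma> \<and> (\<gamma>, fst p) \<in> k)" by (rule nx_prop[OF pV])
    also have "\<dots> \<longleftrightarrow> (fst (f' (dm f')), fst p) \<in> k" using nx_prop[OF pV, of "fst (f' (dm f'))"] nxe by simp
    also have "\<dots> \<longleftrightarrow> pair_less k (f' (dm f')) p"
      using F' pV unfolding pair_less_def by auto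
    finally show ?thesis .
  qed
  have same: "{g\<in>R0. I0_less k f g} = {g\<in>R0. I0_less k f' g}"
    if f: "f \<in> I0_set k" and f': "f' \<in> I0_set k" and e: "data f = data f'" for f f'
  proof (cases "br f")
    case True
    then have "data f = Inl f" unfolding data_def by simp
    then have "f = f'" using e unfolding data_def by (auto split: if_splits)
    then show ?thesis by simp
  next
    case False
    then have "data f = Inr (dm f, dg f, dw f)" unfolding data_def by simp
    then have nb': "\<not> br f'" and eq: "dm f = dm f'" "dg f = dg f'" "dw f = dw f'"
      using e unfolding data_def by (auto split: if_splits)
    show ?thesis
    proof (rule Collect_cong, rule conj_cong, rule refl)
      fix g assume g: "g \<in> R0"
      have gV: "g (dm f) \<in> V" using g unfolding V_def by blast
      show "I0_less k f g \<longleftrightarrow> I0_less k f' g"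
      proof -
        have c1: "I0_less k f g \<longleftrightarrow> (if \<forall>l<dm f. g l = dg f l then pair_less k (f (dm f)) (g (dm f))
          else I0_less k (dg f) g)" by (rule cut_expr[OF False g])
        have c2: "I0_less k f' g \<longleftrightarrow> (if \<forall>l<dm f. g l = dg f l then pair_less k (f' (dm f)) (g (dm f))
          else I0_less k (dg f) g)" using cut_expr[OF nb' g] unfolding eq(1)[symmetric] eq(2)[symmetric] .
        have c3: "pair_less k (f (dm f)) (g (dm f)) = pair_less k (f' (dm f)) (g (dm f))"
          using pl[OF f f' eq(3) gV] eq(1) by simp
        show ?thesis
        proof (cases "\<forall>l<dm f. g l = dg f l")
          case True
          show ?thesis unfolding c1 c2 if_P[OF True] by (rule c3)
        next
          case F: False
          show ?thesis unfolding c1 c2 if_not_P[OF F] by (rule refl)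
        qed
      qed
    qed
  qed
  define D where "D = Inl ` {f::nat \<Rightarrow> 'k \<times> rat. range f \<subseteq> V} \<union>
     Inr ` ((UNIV::nat set) \<times> R0 \<times> (Inl ` (V1 \<times> (UNIV::rat set)) \<union> Inr ` ({None} \<union> Some ` V1)))"
  have data_range: "data ` I0_set k \<subseteq> D"
  proof
    fix x assume "x \<in> data ` I0_set k"
    then obtain f where f: "f \<in> I0_set k" "x = data f" by blast
    show "x \<in> D"
    proof (cases "br f")
      case True
      then show ?thesis using br_range f unfolding data_def D_def by auto
    next
      case False
      have "dw f \<in> Inl ` (V1 \<times> (UNIV::rat set)) \<union> Inr ` ({None} \<union> Some ` V1)"
      proof (cases "fst (f (dm f)) \<in> V1")
        case True
        then show ?thesis unfolding dw_def by (cases "f (dm f)") auto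
      next
        case F: False
        have "Inr (nx (fst (f (dm f)))) \<in> Inr ` ({None} \<union> Some ` V1)" by (rule imageI[OF nx_in])
        then show ?thesis unfolding dw_def if_not_P[OF F] by (rule UnI2)
      qed
      then show ?thesis using False f dg_prop unfolding data_def D_def by auto
    qed
  qed
  have D_lt: "|D| <o k"
  proof -
    have 1: "|Inl ` {f::nat \<Rightarrow> 'k \<times> rat. range f \<subseteq> V}| <o k" by (rule image_lt[OF func_lt[OF VF V_lt]])
    have 2: "|{None} \<union> Some ` V1| <o k" by (rule un_lt[OF finite_lt image_lt[OF V1_lt]]) simp
    have 3: "|Inl ` (V1 \<times> (UNIV::rat set)) \<union> Inr ` ({None} \<union> Some ` V1)| <o k"
      by (rule un_lt[OF image_lt[OF times_lt[OF V1_lt rat_lt]] image_lt[OF 2]])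
    have 4: "|(UNIV::nat set) \<times> R0 \<times> (Inl ` (V1 \<times> (UNIV::rat set)) \<union> Inr ` ({None} \<union> Some ` V1))| <o k"
      by (rule times_lt[OF nat_lt times_lt[OF R0(2) 3]])
    show ?thesis unfolding D_def by (rule un_lt[OF 1 image_lt[OF 4]])
  qed
  have "|(\<lambda>f. {g\<in>R0. I0_less k f g}) ` I0_set k| \<le>o |data ` I0_set k|"
    by (rule factor_card) (use same in blast)
  moreover have "|data ` I0_set k| <o k" using sub_lt data_range D_lt by blast
  ultimately show ?thesis using ordLeq_ordLess_trans by blast
qed

end


context IC
begin

lemma exists_root: "a \<in> I \<Longrightarrow> \<exists>r\<in>St (kzero k). (r,a) \<in> P\<^sup>*"
proof (induction a rule: wf_induct[OF wfP])
  case (1 a)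
  show ?case
  proof (cases "a \<in> St (kzero k)")
    case True then show ?thesis by blast
  next
    case False
    then obtain i \<nu> where i: "i \<in> Field k" "\<nu> \<in> St i" "a = nu i \<nu>" using decomp "1.prems" by blast
    then have vP: "(\<nu>,a) \<in> P" unfolding P_def by blast
    then have "\<nu> \<in> I" using P_I by blast
    then obtain r where "r \<in> St (kzero k)" "(r,\<nu>) \<in> P\<^sup>*" using "1.IH" vP by blast
    then show ?thesis using vP by (meson rtrancl.rtrancl_into_rtrancl)
  qed
qed

lemma root_only: "r \<in> St (kzero k) \<Longrightarrow> (x,r) \<in> P\<^sup>* \<Longrightarrow> x = r"
  by (erule rtranclE) (auto dest: root_noP)

lemma acycP: "(x,c) \<in> P \<Longrightarrow> (c,x) \<in> P\<^sup>* \<Longrightarrow> False"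
proof -
  assume "(x,c) \<in> P" "(c,x) \<in> P\<^sup>*"
  then have "(x,x) \<in> P\<^sup>+" by (rule rtrancl_into_trancl2)
  then show False using wf_acyclic[OF wfP] unfolding acyclic_def by blast
qed

lemma atom_same:
  assumes h1: "\<forall>b\<in>B. ((a,b) \<in> L \<longleftrightarrow> (a',b) \<in> L)" and h2: "\<forall>b\<in>B. ((b,a) \<in> L \<longleftrightarrow> (b,a') \<in> L)"
    and aB: "a \<notin> B" "a' \<notin> B" and ph: "atom_pars \<phi> \<subseteq> B"
  shows "atom_sat L a \<phi> = atom_sat L a' \<phi>"
proof (cases \<phi>)
  case (Lt s t) then show ?thesis using h1 h2 ph Lirr by (cases s; cases t) auto
next
  case (Eq s t) then show ?thesis using aB ph by (cases s; cases t) auto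
qed

lemma tp_same:
  assumes a: "a \<in> I" "a' \<in> I" "a \<notin> B" "a' \<notin> B" and BI: "B \<subseteq> I"
    and c: "{b\<in>B. (a,b) \<in> L} = {b\<in>B. (a',b) \<in> L}"
  shows "tp_bs L a B = tp_bs L a' B"
proof -
  have h1: "\<forall>b\<in>B. ((a,b) \<in> L \<longleftrightarrow> (a',b) \<in> L)" using c by blast
  have h2: "\<forall>b\<in>B. ((b,a) \<in> L \<longleftrightarrow> (b,a') \<in> L)"
  proof
    fix b assume b: "b \<in> B"
    have bI: "b \<in> I" using b BI by blast
    have n1: "a \<noteq> b" "a' \<noteq> b" using a b by auto
    have "(b,a) \<in> L \<longleftrightarrow> (a,b) \<notin> L" using Lflip[OF bI a(1)] n1 by auto
    moreover have "(b,a') \<in> L \<longleftrightarrow> (a',b) \<notin> L" using Lflip[OF bI a(2)] n1 by auto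
    ultimately show "(b,a) \<in> L \<longleftrightarrow> (b,a') \<in> L" using h1 b by blast
  qed
  have "lit_sat L a \<phi> = lit_sat L a' \<phi>" if "lit_pars \<phi> \<subseteq> B" for \<phi>
    using that atom_same[OF h1 h2 a(3,4)] by (cases \<phi>) auto
  then show ?thesis unfolding tp_bs_def by blast
qed

end

context IC2
begin

lemma main_count:
  assumes B: "B \<subseteq> I" "|B| <o k"
  shows "|{tp_bs L a B | a. a \<in> I}| <o k"
proof -
  define par where "par a = (THE \<nu>. (\<nu>,a) \<in> P)" for a
  have par_eq: "par a = \<nu>" if "(\<nu>,a) \<in> P" for \<nu> a
    unfolding par_def using that P_uniq by blast
  have anc_pow: "\<exists>n. x = (par ^^ n) b" if "(x,b) \<in> P\<^sup>*" for x b
    using that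
  proof (induction b rule: rtrancl_induct)
    case base then show ?case by (rule exI[of _ 0]) simp
  next
    case (step y z)
    then obtain n where "x = (par ^^ n) y" by blast
    moreover have "y = par z" using par_eq step(2) by simp
    moreover have "(par ^^ Suc n) z = (par ^^ n) (par z)" by (simp only: funpow_Suc_right comp_apply)
    ultimately have "x = (par ^^ Suc n) z" by simp
    then show ?case by blast
  qed
  define A where "A = {x. \<exists>b\<in>B. (x,b) \<in> P\<^sup>*}"
  have A_sub: "A \<subseteq> (\<Union>n\<in>(UNIV::nat set). (par ^^ n) ` B)"
    unfolding A_def using anc_pow by blast
  have A_lt: "|A| <o k"
    by (rule sub_lt[OF A_sub union_lt[OF nat_lt image_lt[OF B(2)]]])
  have AI: "A \<subseteq> I"
  proof
    fix x assume "x \<in> A"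
    then obtain b where b: "b \<in> B" "(x,b) \<in> P\<^sup>*" unfolding A_def by blast
    from b(2) show "x \<in> I"
    proof (cases rule: converse_rtranclE)
      case base then show ?thesis using b B(1) by blast
    next
      case (step w) then show ?thesis using P_I by blast
    qed
  qed
  have BA: "B \<subseteq> A" unfolding A_def by blast
  have A_up: "y \<in> A" if "x \<in> A" "(y,x) \<in> P\<^sup>*" for x y
    using that unfolding A_def by (blast intro: rtrancl_trans)
  define cutB where "cutB a = {b\<in>B. (a,b) \<in> L}" for a
  \<comment> \<open>reduction of types to cuts\<close>
  have T_sub: "{tp_bs L a B | a. a \<in> I} \<subseteq> (\<lambda>a. tp_bs L a B) ` B \<union> (\<lambda>a. tp_bs L a B) ` (I - B)"
    by blast
  have T2: "|(\<lambda>a. tp_bs L a B) ` (I - B)| \<le>o |cutB ` (I - B)|"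
    by (rule factor_card) (use tp_same B(1) in \<open>auto simp: cutB_def\<close>)
  have top: "a \<in> I \<longrightarrow> a \<notin> A \<longrightarrow> (\<exists>y. (y,a) \<in> P\<^sup>* \<and> y \<notin> A \<and> (y \<in> St (kzero k) \<or> (\<exists>x\<in>A. (x,y) \<in> P)))" for a
  proof (induction a rule: wf_induct[OF wfP])
    case (1 a)
    show ?case
    proof (intro impI)
      assume aI: "a \<in> I" and aA: "a \<notin> A"
      show "\<exists>y. (y,a) \<in> P\<^sup>* \<and> y \<notin> A \<and> (y \<in> St (kzero k) \<or> (\<exists>x\<in>A. (x,y) \<in> P))"
      proof (cases "a \<in> St (kzero k)")
        case True then show ?thesis using aA by blast
      next
        case False
        then obtain i \<nu> where i: "i \<in> Field k" "\<nu> \<in> St i" "a = nu i \<nu>" using decomp aI by blast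
        then have vP: "(\<nu>,a) \<in> P" unfolding P_def by blast
        show ?thesis
        proof (cases "\<nu> \<in> A")
          case True then show ?thesis using vP aA by blast
        next
          case False
          have "\<nu> \<in> I" using P_I vP by blast
          then obtain y where "(y,\<nu>) \<in> P\<^sup>*" "y \<notin> A" "y \<in> St (kzero k) \<or> (\<exists>x\<in>A. (x,y) \<in> P)"
            using "1.IH" vP False by blast
          then show ?thesis using vP by (meson rtrancl.rtrancl_into_rtrancl)
        qed
      qed
    qed
  qed
  have cut_top: "cutB a = cutB y" if "a \<in> I" "(y,a) \<in> P\<^sup>*" "y \<notin> A" "y \<in> I" for a y
  proof -
    have "(a,b) \<in> L \<longleftrightarrow> (y,b) \<in> L" if b: "b \<in> B" for b
    proof -
      have "(y,b) \<notin> P\<^sup>*" using b \<open>y \<notin> A\<close> unfolding A_def by blast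
      then show ?thesis using cmp[of y b a] b B(1) \<open>y \<in> I\<close> \<open>(y,a) \<in> P\<^sup>*\<close> by blast
    qed
    then show ?thesis unfolding cutB_def by blast
  qed
  define Y0 where "Y0 = St (kzero k) - A"
  define Y1 where "Y1 = {y \<in> I - A. \<exists>x\<in>A. (x,y) \<in> P}"
  have cut_split: "cutB ` (I - B) \<subseteq> cutB ` A \<union> cutB ` Y0 \<union> cutB ` Y1"
  proof
    fix c assume "c \<in> cutB ` (I - B)"
    then obtain a where a: "a \<in> I" "c = cutB a" by blast
    show "c \<in> cutB ` A \<union> cutB ` Y0 \<union> cutB ` Y1"
    proof (cases "a \<in> A")
      case True then show ?thesis using a by blast
    next
      case False
      then obtain y where y: "(y,a) \<in> P\<^sup>*" "y \<notin> A" "y \<in> St (kzero k) \<or> (\<exists>x\<in>A. (x,y) \<in> P)"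
        using top a(1) by blast
      have yI: "y \<in> I" using y(3) St_I kzero_in P_I by blast
      have "c = cutB y" using cut_top[OF a(1) y(1,2) yI] a(2) by simp
      moreover have "y \<in> Y0 \<or> y \<in> Y1" using y yI unfolding Y0_def Y1_def by blast
      ultimately show ?thesis by blast
    qed
  qed
  define R where "R = St (kzero k) \<inter> A"
  define rt where "rt b = (SOME r. r \<in> St (kzero k) \<and> (r,b) \<in> P\<^sup>*)" for b
  have rt: "rt b \<in> St (kzero k) \<and> (rt b, b) \<in> P\<^sup>*" if "b \<in> B" for b
  proof -
    have "\<exists>r. r \<in> St (kzero k) \<and> (r,b) \<in> P\<^sup>*" using exists_root that B(1) by blast
    then show ?thesis unfolding rt_def by (rule someI_ex)
  qed
  have rtR: "rt b \<in> R" if "b \<in> B" for b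
    using rt[OF that] that unfolding R_def A_def by blast
  define cutR where "cutR y = {r\<in>R. (y,r) \<in> L}" for y
  have Y0_eq: "cutB y = {b\<in>B. rt b \<in> cutR y}" if y: "y \<in> Y0" for y
  proof -
    have yI: "y \<in> I" using y St_I kzero_in unfolding Y0_def by blast
    have "(y,b) \<in> L \<longleftrightarrow> (y, rt b) \<in> L" if b: "b \<in> B" for b
    proof -
      have r: "rt b \<in> St (kzero k)" "(rt b, b) \<in> P\<^sup>*" using rt b by auto
      have rA: "rt b \<in> A" using rtR b unfolding R_def by blast
      have rI: "rt b \<in> I" using r(1) St_I kzero_in by blast
      have bI: "b \<in> I" using b B(1) by blast
      have ny: "(rt b, y) \<notin> P\<^sup>*"
      proof
        assume "(rt b, y) \<in> P\<^sup>*"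
        then have "rt b = y" using root_only y unfolding Y0_def by blast
        then show False using rA y unfolding Y0_def by blast
      qed
      have "(b,y) \<in> L \<longleftrightarrow> (rt b, y) \<in> L" using cmp[OF rI yI r(2) ny] .
      moreover have "y \<noteq> b" using y b BA unfolding Y0_def by blast
      moreover have "y \<noteq> rt b" using y rA unfolding Y0_def by blast
      ultimately show ?thesis using Lflip yI bI rI by metis
    qed
    then show ?thesis unfolding cutB_def cutR_def using rtR by blast
  qed
  have Y0_sub: "cutB ` Y0 \<subseteq> (\<lambda>C. {b\<in>B. rt b \<in> C}) ` (cutR ` St (kzero k))"
    using Y0_eq unfolding Y0_def by blast
  define R0 where "R0 = {f \<in> I0_set k. emb f \<in> R}"
  have R0_lt: "|R0| <o k"
  proof -
    have "inj_on emb R0" using emb_inj unfolding R0_def inj_on_def by blast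
    moreover have "emb ` R0 \<subseteq> A" unfolding R0_def R_def by blast
    ultimately have "|R0| \<le>o |A|" using card_of_ordLeq by blast
    then show ?thesis using A_lt by (rule leq_lt)
  qed
  have cutR_emb: "cutR (emb f) = emb ` {g\<in>R0. I0_less k f g}" if f: "f \<in> I0_set k" for f
  proof
    show "cutR (emb f) \<subseteq> emb ` {g\<in>R0. I0_less k f g}"
    proof
      fix r assume r: "r \<in> cutR (emb f)"
      then have "r \<in> St (kzero k)" unfolding cutR_def R_def by blast
      then obtain g where g: "g \<in> I0_set k" "r = emb g" using St0 by blast
      then have "g \<in> R0" using r unfolding cutR_def R0_def by blast
      moreover have "I0_less k f g" using emb_ord[OF f g(1)] r g(2) unfolding cutR_def by blast
      ultimately show "r \<in> emb ` {g\<in>R0. I0_less k f g}" using g(2) by blast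
    qed
  next
    show "emb ` {g\<in>R0. I0_less k f g} \<subseteq> cutR (emb f)"
      using emb_ord[OF f] unfolding cutR_def R0_def by blast
  qed
  have cutR_lt: "|cutR ` St (kzero k)| <o k"
  proof -
    have eq: "cutR ` St (kzero k) = (\<lambda>X. emb ` X) ` ((\<lambda>f. {g\<in>R0. I0_less k f g}) ` I0_set k)"
      unfolding St0 image_image using cutR_emb by (rule image_cong[OF refl])
    have "R0 \<subseteq> I0_set k" unfolding R0_def by blast
    then have "|(\<lambda>f. {g\<in>R0. I0_less k f g}) ` I0_set k| <o k" using R0_lt by (rule I0_small)
    then show ?thesis unfolding eq by (rule image_lt)
  qed
  have Y0_lt: "|cutB ` Y0| <o k" by (rule sub_lt[OF Y0_sub image_lt[OF cutR_lt]])
  have "\<forall>y\<in>Y1. \<exists>p. fst p \<in> A \<and> snd p \<in> Field k \<and> fst p \<in> St (snd p) \<and> y = nu (snd p) (fst p)"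
  proof
    fix y assume "y \<in> Y1"
    then obtain x where x: "x \<in> A" "(x,y) \<in> P" unfolding Y1_def by blast
    then obtain i where "i \<in> Field k" "x \<in> St i" "y = nu i x" unfolding P_def by blast
    then show "\<exists>p. fst p \<in> A \<and> snd p \<in> Field k \<and> fst p \<in> St (snd p) \<and> y = nu (snd p) (fst p)"
      using x by (intro exI[of _ "(x,i)"]) simp
  qed
  then obtain pp where pp: "\<And>y. y \<in> Y1 \<Longrightarrow> fst (pp y) \<in> A \<and> snd (pp y) \<in> Field k \<and>
      fst (pp y) \<in> St (snd (pp y)) \<and> y = nu (snd (pp y)) (fst (pp y))"
    using bchoice by metis
  define Cs where "Cs x i = {j \<in> Field k. x \<in> St j \<and> nu j x \<in> A \<and> (i,j) \<in> k}" for x i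
  define nxt where "nxt y = (if Cs (fst (pp y)) (snd (pp y)) = {} then None
      else Some (nu (wo_rel.minim k (Cs (fst (pp y)) (snd (pp y)))) (fst (pp y))))" for y
  have CsF: "Cs x i \<subseteq> Field k" for x i unfolding Cs_def by blast
  define Phi where "Phi x nx b = (if (x,b) \<in> P\<^sup>* then (b = x \<or> (\<forall>j. j \<in> Field k \<and> x \<in> St j \<and> (nu j x, b) \<in> P\<^sup>* \<longrightarrow>
      (\<exists>m. nx = Some (nu m x) \<and> m \<in> Field k \<and> x \<in> St m \<and> (m,j) \<in> k))) else (x,b) \<in> L)" for x nx b
  have Y1_key: "(y,b) \<in> L \<longleftrightarrow> Phi (fst (pp y)) (nxt y) b" if y: "y \<in> Y1" and b: "b \<in> B" for y b
  proof -
    define x where "x = fst (pp y)"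
    define i where "i = snd (pp y)"
    have x: "x \<in> A" "i \<in> Field k" "x \<in> St i" "y = nu i x" using pp[OF y] unfolding x_def i_def by auto
    have yA: "y \<notin> A" and yI: "y \<in> I" using y unfolding Y1_def by auto
    have xI: "x \<in> I" using x AI by blast
    have bI: "b \<in> I" and bA: "b \<in> A" using b B(1) BA by auto
    have xy: "(x,y) \<in> P" using x unfolding P_def by blast
    have child: "(y,b) \<in> L \<longleftrightarrow> (i,j) \<in> k" if j: "j \<in> Field k" "x \<in> St j" "(nu j x, b) \<in> P\<^sup>*" for j
    proof -
      define c where "c = nu j x"
      have cA: "c \<in> A" using A_up[OF bA] j(3) unfolding c_def by blast
      have xc: "(x,c) \<in> P" unfolding c_def P_def using j by blast
      have cI: "c \<in> I" using P_I xc by blast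
      have ji: "j \<noteq> i" using cA yA x(4) unfolding c_def by blast
      have ncy: "(c,y) \<notin> P\<^sup>*"
      proof
        assume "(c,y) \<in> P\<^sup>*"
        then show False
        proof (cases rule: rtranclE)
          case base then show ?thesis using cA yA by blast
        next
          case (step w)
          then have "w = x" using P_uniq xy by blast
          then show ?thesis using step(1) acycP[OF xc] by blast
        qed
      qed
      have cb: "(c,b) \<in> P\<^sup>*" using j(3) unfolding c_def .
      have "(b,y) \<in> L \<longleftrightarrow> (c,y) \<in> L" by (rule cmp[OF cI yI cb ncy])
      moreover have "y \<noteq> b" using yA bA by blast
      moreover have "y \<noteq> c" using yA cA by blast
      ultimately have 1: "(y,b) \<in> L \<longleftrightarrow> (y,c) \<in> L" using Lflip yI bI cI by metis
      have 2: "(y,c) \<in> L \<longleftrightarrow> (i,j) \<in> k"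
      proof
        assume yc: "(y,c) \<in> L"
        show "(i,j) \<in> k"
        proof (rule ccontr)
          assume "(i,j) \<notin> k"
          then have "(j,i) \<in> k" using ktot x(2) j(1) by blast
          then have "(c,y) \<in> L" using child_lt[OF j(1) x(2) j(2) _ ji] x(4) unfolding c_def by blast
          then show False using yc Lasym by blast
        qed
      next
        assume "(i,j) \<in> k"
        then show "(y,c) \<in> L" using child_lt[OF x(2) j(1) x(3) _ ji[symmetric]] x(4) unfolding c_def by blast
      qed
      show ?thesis using 1 2 by simp
    qed
    show ?thesis
    proof (cases "(x,b) \<in> P\<^sup>*")
      case False
      have "(y,b) \<in> L \<longleftrightarrow> (x,b) \<in> L" using cmp[OF xI bI _ False] xy by blast
      then show ?thesis unfolding Phi_def x_def[symmetric] using False by simp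
    next
      case True
      show ?thesis
      proof (cases "b = x")
        case True
        then have "(y,b) \<in> L" using Sbelow[OF x(2,3)] x(4) by simp
        then show ?thesis unfolding Phi_def x_def[symmetric] using True \<open>(x,b) \<in> P\<^sup>*\<close> by simp
      next
        case bx: False
        obtain c where c: "(x,c) \<in> P" "(c,b) \<in> P\<^sup>*"
        proof -
          from True show thesis
          proof (cases rule: converse_rtranclE)
            case base then show ?thesis using bx by simp
          next
            case (step c) then show ?thesis using that by blast
          qed
        qed
        then obtain j where j: "j \<in> Field k" "x \<in> St j" "c = nu j x" unfolding P_def by blast
        have PhiE: "Phi x (nxt y) b \<longleftrightarrow> (\<forall>j. j \<in> Field k \<and> x \<in> St j \<and> (nu j x, b) \<in> P\<^sup>* \<longrightarrow>
            (\<exists>m. nxt y = Some (nu m x) \<and> m \<in> Field k \<and> x \<in> St m \<and> (m,j) \<in> k))"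
          unfolding Phi_def using True bx by simp
        have "(y,b) \<in> L \<longleftrightarrow> Phi x (nxt y) b"
        proof
          assume yb: "(y,b) \<in> L"
          show "Phi x (nxt y) b" unfolding PhiE
          proof (intro allI impI)
            fix j' assume j': "j' \<in> Field k \<and> x \<in> St j' \<and> (nu j' x, b) \<in> P\<^sup>*"
            have ij: "(i,j') \<in> k" using child j' yb by blast
            have "nu j' x \<in> A" using A_up[OF bA] j' by blast
            then have jC: "j' \<in> Cs x i" unfolding Cs_def using j' ij by blast
            then have ne: "Cs x i \<noteq> {}" by blast
            define m where "m = wo_rel.minim k (Cs x i)"
            have mC: "m \<in> Cs x i" unfolding m_def using wo_rel.minim_in[OF wo CsF ne] .
            have mj: "(m,j') \<in> k" unfolding m_def using wo_rel.minim_least[OF wo CsF jC] .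
            have "nxt y = Some (nu m x)" unfolding nxt_def m_def x_def i_def using ne x_def i_def by simp
            then show "\<exists>m. nxt y = Some (nu m x) \<and> m \<in> Field k \<and> x \<in> St m \<and> (m,j') \<in> k"
              using mC mj unfolding Cs_def by blast
          qed
        next
          assume ph: "Phi x (nxt y) b"
          have cb: "(nu j x, b) \<in> P\<^sup>*" using c(2) j(3) by simp
          obtain m where m: "nxt y = Some (nu m x)" "m \<in> Field k" "x \<in> St m" "(m,j) \<in> k"
            using ph j cb unfolding PhiE by blast
          have ne: "Cs x i \<noteq> {}" using m(1) unfolding nxt_def x_def i_def by (auto split: if_splits)
          define m0 where "m0 = wo_rel.minim k (Cs x i)"
          have m0C: "m0 \<in> Cs x i" unfolding m0_def using wo_rel.minim_in[OF wo CsF ne] .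
          have "nxt y = Some (nu m0 x)" unfolding nxt_def m0_def x_def i_def using ne x_def i_def by simp
          then have "nu m x = nu m0 x" using m(1) by simp
          then have "m = m0" using nu_uniq[OF m(2) _ m(3)] m0C unfolding Cs_def by blast
          then have "(i,m) \<in> k" using m0C unfolding Cs_def by blast
          then have "(i,j) \<in> k" using m(4) ktrans by blast
          then show "(y,b) \<in> L" using child j cb by blast
        qed
        then show ?thesis unfolding x_def .
      qed
    qed
  qed
  define dat where "dat y = (fst (pp y), nxt y)" for y
  have Y1_fac: "|cutB ` Y1| \<le>o |dat ` Y1|"
  proof (rule factor_card)
    fix y y' assume y: "y \<in> Y1" and y': "y' \<in> Y1" and e: "dat y = dat y'"
    have "fst (pp y) = fst (pp y')" "nxt y = nxt y'" using e unfolding dat_def by auto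
    then show "cutB y = cutB y'" unfolding cutB_def using Y1_key[OF y] Y1_key[OF y'] by auto
  qed
  have dat_sub: "dat ` Y1 \<subseteq> A \<times> ({None} \<union> Some ` A)"
  proof
    fix d assume "d \<in> dat ` Y1"
    then obtain y where y: "y \<in> Y1" "d = dat y" by blast
    have xA: "fst (pp y) \<in> A" using pp[OF y(1)] by blast
    have "nxt y \<in> {None} \<union> Some ` A"
    proof (cases "Cs (fst (pp y)) (snd (pp y)) = {}")
      case True then show ?thesis unfolding nxt_def by simp
    next
      case False
      have "wo_rel.minim k (Cs (fst (pp y)) (snd (pp y))) \<in> Cs (fst (pp y)) (snd (pp y))"
        using wo_rel.minim_in[OF wo CsF False] .
      then have "nu (wo_rel.minim k (Cs (fst (pp y)) (snd (pp y)))) (fst (pp y)) \<in> A"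
        unfolding Cs_def by blast
      then show ?thesis unfolding nxt_def using False by simp
    qed
    then show "d \<in> A \<times> ({None} \<union> Some ` A)" using xA y(2) unfolding dat_def by simp
  qed
  have Y1_lt: "|cutB ` Y1| <o k"
  proof -
    have "|{None} \<union> Some ` A| <o k" by (rule un_lt[OF finite_lt image_lt[OF A_lt]]) simp
    then have "|A \<times> ({None} \<union> Some ` A)| <o k" by (rule times_lt[OF A_lt])
    then have "|dat ` Y1| <o k" by (rule sub_lt[OF dat_sub])
    then show ?thesis by (rule leq_lt[OF Y1_fac])
  qed
  have cut_lt: "|cutB ` (I - B)| <o k"
    by (rule sub_lt[OF cut_split un_lt[OF un_lt[OF image_lt[OF A_lt] Y0_lt] Y1_lt]])
  have "|(\<lambda>a. tp_bs L a B) ` (I - B)| <o k" by (rule leq_lt[OF T2 cut_lt])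
  then have "|(\<lambda>a. tp_bs L a B) ` B \<union> (\<lambda>a. tp_bs L a B) ` (I - B)| <o k"
    by (rule un_lt[OF image_lt[OF B(2)]])
  then show ?thesis by (rule sub_lt[OF T_sub])
qed

lemma stable: "bs_stable k I L"
  unfolding bs_stable_def using main_count by blast

end



theorem mainTheorem15:
  fixes k :: "'k rel" and l :: "'l rel"
    and L :: "'x rel" and St :: "'k \<Rightarrow> 'x set" and nu :: "'k \<Rightarrow> 'x \<Rightarrow> 'x"
    and emb :: "(nat \<Rightarrow> 'k \<times> rat) \<Rightarrow> 'x" and I :: "'x set"
  assumes card: "Card_order k"
    and regular: "regularCard k"
    and uncountable: "ordLess2 natLeq k"
    and kappa_lt_kappa: "\<forall>A. A \<subseteq> Field k \<and> ordLess2 (card_of A) k \<longrightarrow>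
                            ordLeq3 (card_of (Func A (Field k))) k"
    and gamma_omega: "\<forall>A. A \<subseteq> Field k \<and> ordLess2 (card_of A) k \<longrightarrow>
                            ordLess2 (card_of (Func (UNIV :: nat set) A)) k"
    and lambda: "Card_order l" "ordIso2 (cardSuc l) k"
    and constr: "is_I_construction k L St nu emb I"
  shows "bs_stable k I L"
proof -
  have "ordLess2 natLeq (card_of (Field k))"
    by (rule ordLess_ordIso_trans[OF uncountable ordIso_symmetric[OF card_of_Field_ordIso[OF card]]])
  then have "ordLeq3 natLeq (card_of (Field k))" by (rule ordLess_imp_ordLeq)
  then have INF: "\<not> finite (Field k)" using infinite_iff_natLeq_ordLeq by blast
  have "IC2 k L St nu emb I"
    by (intro IC2.intro IC.intro IC2_axioms.intro) (fact card INF constr regular uncountable gamma_omega)+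
  then show ?thesis by (rule IC2.stable)
qed

end
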